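(* Let $n,d,a,k$ be positive integers and suppose the triple $(n,d,a)$ is good. Then (1) $(n,d,ka)$ is good; (2) $(n,kd,ka)$ is good.
   Context: For positive integers $N,D,A$, let $R=\mathbb{C}[x_1,\dots,x_N]$ with $\mathfrak{S}_N$ permuting variables and $R_A^{\mathfrak{S}_N}$ the symmetric polynomials homogeneous of degree $A$. The triple $(N,D,A)$ is good if there exists $f\in R_A^{\mathfrak{S}_N}$ such that $x_1^D-x_N^D,\dots,x_{N-1}^D-x_N^D,f$ is a regular sequence (equivalently, $f$ has no zero on $\mathcal{V}_D=\{(z_1,\dots,z_N)\in\mathbb{C}^N: z_i^D=1\ \forall i,\ z_N=1\}$); otherwise it is bad. *)

theory Defs
  imports Complex_Main "HOL-Combinatorics.Permutations"
begin

text \<open>Variables x_1..x_N are indexed by 0..N-1. A homogeneous polynomial of degree A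
in N variables is given by its coefficient function on the (finite) set of exponent
vectors of total degree A supported in {0..<N}.\<close>

definition hmonos :: "nat \<Rightarrow> nat \<Rightarrow> (nat \<Rightarrow> nat) set" where
  "hmonos N A = {m. (\<forall>i\<ge>N. m i = 0) \<and> (\<Sum>i<N. m i) = A}"

definition hpoly_eval :: "nat \<Rightarrow> nat \<Rightarrow> ((nat \<Rightarrow> nat) \<Rightarrow> complex) \<Rightarrow> (nat \<Rightarrow> complex) \<Rightarrow> complex" where
  "hpoly_eval N A c z = (\<Sum>m\<in>hmonos N A. c m * (\<Prod>i<N. z i ^ m i))"

definition symmetric_coeffs :: "nat \<Rightarrow> nat \<Rightarrow> ((nat \<Rightarrow> nat) \<Rightarrow> complex) \<Rightarrow> bool" where
  "symmetric_coeffs N A c \<longleftrightarrow>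
     (\<forall>\<sigma>. \<sigma> permutes {..<N} \<longrightarrow> (\<forall>m\<in>hmonos N A. c (m \<circ> \<sigma>) = c m))"

definition V :: "nat \<Rightarrow> nat \<Rightarrow> (nat \<Rightarrow> complex) set" where
  "V N D = {z. (\<forall>i<N. z i ^ D = 1) \<and> z (N - 1) = 1}"

definition good :: "nat \<Rightarrow> nat \<Rightarrow> nat \<Rightarrow> bool" where
  "good N D A \<longleftrightarrow>
     (\<exists>c. symmetric_coeffs N A c \<and> (\<forall>z\<in>V N D. hpoly_eval N A c z \<noteq> 0))"

end

theory Submission
  imports Defs
begin

lemma hmonos_finite: "finite (hmonos N A)"
proof -
  have "hmonos N A \<subseteq> {f. \<forall>x. (x \<in> {..<N} \<longrightarrow> f x \<in> {..A}) \<and> (x \<notin> {..<N} \<longrightarrow> f x = 0)}"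
  proof
    fix m assume m: "m \<in> hmonos N A"
    have "\<forall>x. (x \<in> {..<N} \<longrightarrow> m x \<in> {..A})"
    proof (intro allI impI)
      fix x assume "x \<in> {..<N}"
      hence "m x \<le> (\<Sum>i<N. m i)" by (intro member_le_sum) auto
      thus "m x \<in> {..A}" using m by (simp add: hmonos_def)
    qed
    thus "m \<in> {f. \<forall>x. (x \<in> {..<N} \<longrightarrow> f x \<in> {..A}) \<and> (x \<notin> {..<N} \<longrightarrow> f x = 0)}"
      using m by (auto simp: hmonos_def)
  qed
  thus ?thesis by (rule finite_subset) (rule finite_set_of_finite_funs, auto)
qed

lemma hmonos_perm:
  assumes "\<sigma> permutes {..<N}" "m \<in> hmonos N A"
  shows "m \<circ> \<sigma> \<in> hmonos N A"
proof -
  have "(\<Sum>i<N. (m \<circ> \<sigma>) i) = (\<Sum>i<N. m i)"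
    using sum.permute[OF assms(1), of m] by simp
  moreover have "\<forall>i\<ge>N. (m \<circ> \<sigma>) i = 0"
    using assms by (auto simp: hmonos_def permutes_def)
  ultimately show ?thesis using assms(2) by (simp add: hmonos_def)
qed

lemma hmonos_add: "p \<in> hmonos N A \<Longrightarrow> q \<in> hmonos N B \<Longrightarrow> (\<lambda>i. p i + q i) \<in> hmonos N (A + B)"
  by (auto simp: hmonos_def sum.distrib)

lemma mult_lemma:
  assumes "symmetric_coeffs N A c1" "symmetric_coeffs N B c2"
  shows "\<exists>c. symmetric_coeffs N (A+B) c \<and>
     (\<forall>z. hpoly_eval N (A+B) c z = hpoly_eval N A c1 z * hpoly_eval N B c2 z)"
proof -
  let ?S = "hmonos N A \<times> hmonos N B"
  define c where "c m = (\<Sum>pq\<in>{pq\<in>?S. (\<lambda>i. fst pq i + snd pq i) = m}. c1 (fst pq) * c2 (snd pq))" for m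
  have ev: "hpoly_eval N (A+B) c z = hpoly_eval N A c1 z * hpoly_eval N B c2 z" for z
  proof -
    let ?h = "\<lambda>pq. c1 (fst pq) * c2 (snd pq) * (\<Prod>i<N. z i ^ (fst pq i + snd pq i))"
    have "hpoly_eval N (A+B) c z = (\<Sum>m\<in>hmonos N (A+B). \<Sum>pq\<in>{pq\<in>?S. (\<lambda>i. fst pq i + snd pq i) = m}. ?h pq)"
      unfolding hpoly_eval_def c_def sum_distrib_right
      by (intro sum.cong refl) auto
    also have "\<dots> = sum ?h ?S"
      by (rule sum.group) (auto simp: hmonos_finite intro: hmonos_add)
    also have "\<dots> = (\<Sum>p\<in>hmonos N A. \<Sum>q\<in>hmonos N B. (c1 p * (\<Prod>i<N. z i ^ p i)) * (c2 q * (\<Prod>i<N. z i ^ q i)))"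
      unfolding sum.cartesian_product
      by (intro sum.cong refl) (auto simp: power_add prod.distrib mult_ac)
    also have "\<dots> = hpoly_eval N A c1 z * hpoly_eval N B c2 z"
      unfolding hpoly_eval_def sum_product by simp
    finally show ?thesis .
  qed
  have sym: "symmetric_coeffs N (A+B) c"
    unfolding symmetric_coeffs_def
  proof (intro allI impI ballI)
    fix \<sigma> m assume s: "\<sigma> permutes {..<N}" and m: "m \<in> hmonos N (A+B)"
    have si: "inv \<sigma> permutes {..<N}" using s by (rule permutes_inv)
    have io: "\<sigma> \<circ> inv \<sigma> = id" "inv \<sigma> \<circ> \<sigma> = id"
      using s by (auto simp: permutes_inv_o)
    show "c (m \<circ> \<sigma>) = c m"
      unfolding c_def
    proof (rule sum.reindex_bij_witness[where i="\<lambda>(p,q). (p \<circ> \<sigma>, q \<circ> \<sigma>)" and j="\<lambda>(p,q). (p \<circ> inv \<sigma>, q \<circ> inv \<sigma>)"])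
      fix a assume a: "a \<in> {pq \<in> ?S. (\<lambda>i. fst pq i + snd pq i) = m \<circ> \<sigma>}"
      show "(case (case a of (p, q) \<Rightarrow> (p \<circ> inv \<sigma>, q \<circ> inv \<sigma>)) of (p, q) \<Rightarrow> (p \<circ> \<sigma>, q \<circ> \<sigma>)) = a"
        by (cases a) (simp add: comp_assoc io)
      show "(case a of (p, q) \<Rightarrow> (p \<circ> inv \<sigma>, q \<circ> inv \<sigma>)) \<in> {pq \<in> ?S. (\<lambda>i. fst pq i + snd pq i) = m}"
      proof (cases a)
        case (Pair p q)
        have "(\<lambda>i. p i + q i) \<circ> inv \<sigma> = m" using a Pair by (simp add: comp_assoc io)
        hence "(\<lambda>i. (p \<circ> inv \<sigma>) i + (q \<circ> inv \<sigma>) i) = m" by (auto simp: fun_eq_iff)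
        thus ?thesis using a Pair hmonos_perm[OF si] by auto
      qed
      show "c1 (fst (case a of (p, q) \<Rightarrow> (p \<circ> inv \<sigma>, q \<circ> inv \<sigma>))) * c2 (snd (case a of (p, q) \<Rightarrow> (p \<circ> inv \<sigma>, q \<circ> inv \<sigma>))) = c1 (fst a) * c2 (snd a)"
        using a assms si unfolding symmetric_coeffs_def by (cases a) auto
    next
      fix b assume b: "b \<in> {pq \<in> ?S. (\<lambda>i. fst pq i + snd pq i) = m}"
      show "(case (case b of (p, q) \<Rightarrow> (p \<circ> \<sigma>, q \<circ> \<sigma>)) of (p, q) \<Rightarrow> (p \<circ> inv \<sigma>, q \<circ> inv \<sigma>)) = b"
        by (cases b) (simp add: comp_assoc io)
      show "(case b of (p, q) \<Rightarrow> (p \<circ> \<sigma>, q \<circ> \<sigma>)) \<in> {pq \<in> ?S. (\<lambda>i. fst pq i + snd pq i) = m \<circ> \<sigma>}"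
        using b hmonos_perm[OF s] by (auto simp: fun_eq_iff)
    qed
  qed
  show ?thesis using sym ev by blast
qed

lemma subst_lemma:
  assumes "symmetric_coeffs N A c" "k > 0"
  shows "\<exists>c'. symmetric_coeffs N (k*A) c' \<and>
     (\<forall>z. hpoly_eval N (k*A) c' z = hpoly_eval N A c (\<lambda>i. z i ^ k))"
proof -
  define c' where "c' m = (if (\<forall>i. k dvd m i) then c (\<lambda>i. m i div k) else 0)" for m
  let ?e = "\<lambda>p i. k * p i"
  have inj: "inj_on ?e (hmonos N A)"
    using assms(2) by (auto simp: inj_on_def fun_eq_iff)
  have img: "?e ` hmonos N A \<subseteq> hmonos N (k*A)"
    by (auto simp: hmonos_def sum_distrib_left[symmetric])
  have divmem: "(\<lambda>i. m i div k) \<in> hmonos N A" if "m \<in> hmonos N (k*A)" "\<forall>i. k dvd m i" for m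
  proof -
    have "m i = k * (m i div k)" for i using that(2) by simp
    hence "(\<Sum>i<N. m i) = k * (\<Sum>i<N. m i div k)" by (simp add: sum_distrib_left)
    thus ?thesis using that assms(2) by (auto simp: hmonos_def)
  qed
  have ev: "hpoly_eval N (k*A) c' z = hpoly_eval N A c (\<lambda>i. z i ^ k)" for z
  proof -
    let ?g = "\<lambda>m. c' m * (\<Prod>i<N. z i ^ m i)"
    have "hpoly_eval N (k*A) c' z = sum ?g (?e ` hmonos N A)"
      unfolding hpoly_eval_def
    proof (rule sum.mono_neutral_right)
      show "finite (hmonos N (k*A))" by (rule hmonos_finite)
      show "?e ` hmonos N A \<subseteq> hmonos N (k*A)" by (rule img)
      show "\<forall>m\<in>hmonos N (k * A) - ?e ` hmonos N A. ?g m = 0"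
      proof
        fix m assume m: "m \<in> hmonos N (k * A) - ?e ` hmonos N A"
        have "\<not> (\<forall>i. k dvd m i)"
        proof
          assume d: "\<forall>i. k dvd m i"
          hence "m = ?e (\<lambda>i. m i div k)" by (auto simp: fun_eq_iff)
          moreover have "(\<lambda>i. m i div k) \<in> hmonos N A" using m divmem d by blast
          ultimately have "m \<in> ?e ` hmonos N A" by (rule image_eqI)
          thus False using m by blast
        qed
        thus "?g m = 0" unfolding c'_def by auto
      qed
    qed
    also have "\<dots> = sum (?g \<circ> ?e) (hmonos N A)" by (rule sum.reindex[OF inj])
    also have "\<dots> = hpoly_eval N A c (\<lambda>i. z i ^ k)"
      unfolding hpoly_eval_def using assms(2)
      by (intro sum.cong refl) (simp add: c'_def power_mult)
    finally show ?thesis .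
  qed
  have sym: "symmetric_coeffs N (k*A) c'"
    unfolding symmetric_coeffs_def
  proof (intro allI impI ballI)
    fix \<sigma> m assume s: "\<sigma> permutes {..<N}" and m: "m \<in> hmonos N (k*A)"
    have dv: "(\<forall>i. k dvd (m \<circ> \<sigma>) i) \<longleftrightarrow> (\<forall>i. k dvd m i)"
      using s by (metis comp_apply permutes_surj surj_def)
    show "c' (m \<circ> \<sigma>) = c' m"
    proof (cases "\<forall>i. k dvd m i")
      case True
      have "c (\<lambda>i. m i div k) = c ((\<lambda>i. m i div k) \<circ> \<sigma>)"
        using assms(1) s divmem[OF m True] unfolding symmetric_coeffs_def by metis
      also have "(\<lambda>i. m i div k) \<circ> \<sigma> = (\<lambda>i. (m \<circ> \<sigma>) i div k)" by (simp add: fun_eq_iff)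
      finally show ?thesis using True dv by (simp add: c'_def)
    next
      case False
      hence "\<not> (\<forall>i. k dvd (m \<circ> \<sigma>) i)" using dv by blast
      thus ?thesis using False unfolding c'_def by auto
    qed
  qed
  show ?thesis using sym ev by blast
qed

lemma pow_lemma:
  assumes "symmetric_coeffs N A c" "k > 0"
  shows "\<exists>c'. symmetric_coeffs N (k*A) c' \<and>
     (\<forall>z. hpoly_eval N (k*A) c' z = hpoly_eval N A c z ^ k)"
  using assms(2)
proof (induction k rule: nat_induct_non_zero)
  case 1 thus ?case using assms(1) by auto
next
  case (Suc k)
  then obtain c1 where c1: "symmetric_coeffs N (k*A) c1"
     "\<forall>z. hpoly_eval N (k*A) c1 z = hpoly_eval N A c z ^ k" by blast
  from mult_lemma[OF c1(1) assms(1)] obtain c2 where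
    "symmetric_coeffs N (k*A+A) c2"
    "\<forall>z. hpoly_eval N (k*A+A) c2 z = hpoly_eval N (k*A) c1 z * hpoly_eval N A c z" by blast
  thus ?case using c1(2) by (auto simp: add.commute mult.commute)
qed

theorem proposition3p25:
  fixes n d a k :: nat
  assumes "n > 0" "d > 0" "a > 0" "k > 0"
    and "good n d a"
  shows "good n d (k * a) \<and> good n (k * d) (k * a)"
proof -
  obtain c where c: "symmetric_coeffs n a c" "\<forall>z\<in>V n d. hpoly_eval n a c z \<noteq> 0"
    using assms(5) by (auto simp: good_def)
  obtain c1 where c1: "symmetric_coeffs n (k*a) c1"
     "\<forall>z. hpoly_eval n (k*a) c1 z = hpoly_eval n a c z ^ k"
    using pow_lemma[OF c(1) assms(4)] by blast
  obtain c2 where c2: "symmetric_coeffs n (k*a) c2"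
     "\<forall>z. hpoly_eval n (k*a) c2 z = hpoly_eval n a c (\<lambda>i. z i ^ k)"
    using subst_lemma[OF c(1) assms(4)] by blast
  have "good n d (k * a)"
    unfolding good_def using c1 c(2) by auto
  moreover have "good n (k * d) (k * a)"
    unfolding good_def
  proof (intro exI conjI ballI)
    show "symmetric_coeffs n (k*a) c2" by (rule c2(1))
    fix z assume z: "z \<in> V n (k*d)"
    have "(\<lambda>i. z i ^ k) \<in> V n d"
      using z by (auto simp: V_def power_mult[symmetric])
    thus "hpoly_eval n (k*a) c2 z \<noteq> 0" using c2(2) c(2) by auto
  qed
  ultimately show ?thesis ..
qed

end
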